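(* Let $\mathbb{K}\in\{\mathbb{C},\mathbb{R}\}$, let $f=(f_1,f_2):\mathbb{K}^2\to\mathbb{K}^2$ be a dominant polynomial map whose components have non-zero constant terms, and let $\Gamma$ be an edge of $A=\mathsf{NP}(f_1)\oplus\mathsf{NP}(f_2)$. Then the set $\mathtt{TF}_{\mathbb{K}}(\Gamma)$ does not depend on the choice of $U\in\mathcal{T}_\Gamma$ used in its definition: for any $U,U'\in\mathcal{T}_\Gamma$, the sets $\mathtt{TF}_{\mathbb{K}}(\Gamma)$ defined using $\overline{U}$ and using $\overline{U'}$ coincide.
   Context: Standing setting. $\mathbb{K}^*=\mathbb{K}\setminus\{0\}$. $f=(f_1,f_2)$ with $f_i\in\mathbb{K}[x_1,x_2]$ is dominant and $f_1,f_2$ have non-zero constant terms. The Newton polytope $\mathsf{NP}(P)$ of $P=\sum c_a x^a$ is the convex hull of $\{a: c_a\neq0\}$. $A_i=\mathsf{NP}(f_i)$, $A=A_1\oplus A_2$. The face of a polygon $P$ supported by nonzero $\alpha\in\mathbb{R}^2$ is the set of minimizers of $\langle\alpha,\cdot\rangle$ on $P$. An edge $\Gamma$ of $A$ is a 1-dimensional face; with $\alpha$ supporting it, $\Gamma=\Gamma_1\oplus\Gamma_2$ where $\Gamma_i$ is the face of $A_i$ supported by $\alpha$. $\Gamma$-toric transformations. Let $a_1$ be a vertex of $\Gamma$ of minimal Euclidean norm, $v$ the primitive integer vector from $a_1$ along $\Gamma$, and $w\in\mathbb{Z}^2$ such that $(v,w)$ is a basis of $\mathbb{Z}^2$ and $A-a_1\subset\{b_1v+b_2w:b_1,b_2\ge0\}$.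 With $T$ the matrix with rows $v,w$, put $U=(T^{-1})^\top$; $\mathcal{T}_\Gamma$ is the set of all such $U$. $U$ maps $\sum c_ax^a$ to $\sum c_a z^{Ua}$. With $\gamma_i$ the vertices of $\Gamma_i$ such that $\gamma_1+\gamma_2=a_1$, set $\overline{U}(f-y):=\big(U(x^{-\gamma_1}(f_1-y_1)),U(x^{-\gamma_2}(f_2-y_2))\big)\in\mathbb{K}[z_1,z_2]^2$. $\mathtt{T}$-multiplicity sets. $\mathrm{Sol}_{\mathbb{K}}(\Gamma)$ is the set of $\rho\in\mathbb{K}^*$ such that $(\rho,0)$ is a common zero of $\overline{U}(f-\tilde y)$ for some $\tilde y\in\mathbb{K}^2$. For $\rho\in\mathrm{Sol}_{\mathbb{K}}(\Gamma)$, $\mathtt{TF}^{\rho}_{\mathbb{K}}(\Gamma)$ is the Euclidean closure of the set of $y\in\mathbb{K}^2$ such that $\overline{U}(f-y)(\rho,0)=0$ and there exist sequences $\varrho_k\in(\mathbb{K}^* )^2$, $y_k\in\mathbb{K}^2$ with $\varrho_k\to(\rho,0)$, $y_k\to y$ and $\overline{U}(f-y_k)(\varrho_k)=0$. Finally $\mathtt{TF}_{\mathbb{K}}(\Gamma)=\bigcup_{\rho\in\mathrm{Sol}_{\mathbb{K}}(\Gamma)}\mathtt{TF}^{\rho}_{\mathbb{K}}(\Gamma)$. *)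

theory Defs
  imports "HOL-Analysis.Analysis"
begin

text \<open>Laurent polynomials in two variables over a field, represented by their
  coefficient function on exponent vectors in Z^2 (finite support is imposed where needed).
  The coefficient of x^a is P a.\<close>
type_synonym 'a lpoly = "int \<times> int \<Rightarrow> 'a"

definition supp :: "'a::zero lpoly \<Rightarrow> (int \<times> int) set" where
  "supp P = {a. P a \<noteq> 0}"

definition is_poly2 :: "'a::zero lpoly \<Rightarrow> bool" where
  "is_poly2 P \<longleftrightarrow> finite (supp P) \<and> (\<forall>a\<in>supp P. fst a \<ge> 0 \<and> snd a \<ge> 0)"

definition leval :: "'a::field lpoly \<Rightarrow> 'a \<times> 'a \<Rightarrow> 'a" where
  "leval P z = (\<Sum>a\<in>supp P. P a * (fst z powi fst a) * (snd z powi snd a))"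

text \<open>Dominance: the image of (f1,f2) : K^2 -> K^2 is Zariski dense, i.e. no nonzero
  polynomial vanishes on it.\<close>
definition dominant2 :: "'a::field lpoly \<Rightarrow> 'a lpoly \<Rightarrow> bool" where
  "dominant2 f1 f2 \<longleftrightarrow>
     (\<forall>g. is_poly2 g \<and> (\<forall>x. leval g (leval f1 x, leval f2 x) = 0) \<longrightarrow> (\<forall>a. g a = 0))"

definition rvec :: "int \<times> int \<Rightarrow> real \<times> real" where
  "rvec a = (of_int (fst a), of_int (snd a))"

definition NP :: "'a::zero lpoly \<Rightarrow> (real \<times> real) set" where
  "NP P = convex hull (rvec ` supp P)"

definition msum :: "(real \<times> real) set \<Rightarrow> (real \<times> real) set \<Rightarrow> (real \<times> real) set" where
  "msum A B = {a + b | a b. a \<in> A \<and> b \<in> B}"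

definition face :: "(real \<times> real) set \<Rightarrow> real \<times> real \<Rightarrow> (real \<times> real) set" where
  "face P \<alpha> = {x \<in> P. \<forall>y\<in>P. \<alpha> \<bullet> x \<le> \<alpha> \<bullet> y}"

definition is_edge :: "(real \<times> real) set \<Rightarrow> (real \<times> real) set \<Rightarrow> bool" where
  "is_edge P \<Gamma> \<longleftrightarrow> (\<exists>\<alpha>. \<alpha> \<noteq> 0 \<and> \<Gamma> = face P \<alpha>) \<and> aff_dim \<Gamma> = 1"

definition min_norm_vertex :: "(real \<times> real) set \<Rightarrow> int \<times> int \<Rightarrow> bool" where
  "min_norm_vertex \<Gamma> a1 \<longleftrightarrow> rvec a1 extreme_point_of \<Gamma> \<and>
     (\<forall>b. b extreme_point_of \<Gamma> \<longrightarrow> norm (rvec a1) \<le> norm b)"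

definition det2 :: "int \<times> int \<Rightarrow> int \<times> int \<Rightarrow> int" where
  "det2 v w = fst v * snd w - snd v * fst w"

definition toric_basis ::
  "(real \<times> real) set \<Rightarrow> (real \<times> real) set \<Rightarrow> int \<times> int \<Rightarrow> int \<times> int \<Rightarrow> int \<times> int \<Rightarrow> bool" where
  "toric_basis A \<Gamma> a1 v w \<longleftrightarrow>
     gcd (fst v) (snd v) = 1 \<and>
     (\<exists>t>0. rvec a1 + t *\<^sub>R rvec v \<in> \<Gamma>) \<and>
     (det2 v w = 1 \<or> det2 v w = -1) \<and>
     (\<forall>x\<in>A. \<exists>b1 b2. b1 \<ge> 0 \<and> b2 \<ge> 0 \<and> x - rvec a1 = b1 *\<^sub>R rvec v + b2 *\<^sub>R rvec w)"

text \<open>U = (T^{-1})^T where T is the integer matrix with rows v, w (det T = d = +-1,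
  so T^{-1} = d * adj T). U acts on exponent vectors.\<close>
definition Umat :: "int \<times> int \<Rightarrow> int \<times> int \<Rightarrow> int \<times> int \<Rightarrow> int \<times> int" where
  "Umat v w a = (let d = det2 v w in
      (d * (snd w * fst a - fst w * snd a), d * (fst v * snd a - snd v * fst a)))"

definition T_Gamma ::
  "(real \<times> real) set \<Rightarrow> (real \<times> real) set \<Rightarrow> int \<times> int \<Rightarrow> (int \<times> int \<Rightarrow> int \<times> int) set" where
  "T_Gamma A \<Gamma> a1 = {U. \<exists>v w. toric_basis A \<Gamma> a1 v w \<and> U = Umat v w}"

definition ptrans :: "(int \<times> int \<Rightarrow> int \<times> int) \<Rightarrow> 'a::comm_monoid_add lpoly \<Rightarrow> 'a lpoly" where
  "ptrans U P = (\<lambda>b. \<Sum>a\<in>{a \<in> supp P. U a = b}. P a)"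

text \<open>Multiplication by x^(-g).\<close>
definition xshift :: "int \<times> int \<Rightarrow> 'a lpoly \<Rightarrow> 'a lpoly" where
  "xshift g P = (\<lambda>a. P (a + g))"

definition minus_const :: "'a::ab_group_add lpoly \<Rightarrow> 'a \<Rightarrow> 'a lpoly" where
  "minus_const P c = (\<lambda>a. P a - (if a = (0, 0) then c else 0))"

definition Ubar ::
  "(int \<times> int \<Rightarrow> int \<times> int) \<Rightarrow> int \<times> int \<Rightarrow> int \<times> int \<Rightarrow> 'a::field lpoly \<Rightarrow> 'a lpoly \<Rightarrow> 'a \<times> 'a
    \<Rightarrow> 'a lpoly \<times> 'a lpoly" where
  "Ubar U \<gamma>1 \<gamma>2 f1 f2 y =
     (ptrans U (xshift \<gamma>1 (minus_const f1 (fst y))), ptrans U (xshift \<gamma>2 (minus_const f2 (snd y))))"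

definition common_zero :: "'a::field lpoly \<times> 'a lpoly \<Rightarrow> 'a \<times> 'a \<Rightarrow> bool" where
  "common_zero PQ z \<longleftrightarrow> leval (fst PQ) z = 0 \<and> leval (snd PQ) z = 0"

definition Sol ::
  "(int \<times> int \<Rightarrow> int \<times> int) \<Rightarrow> int \<times> int \<Rightarrow> int \<times> int \<Rightarrow> 'a::field lpoly \<Rightarrow> 'a lpoly \<Rightarrow> 'a set" where
  "Sol U \<gamma>1 \<gamma>2 f1 f2 = {\<rho>. \<rho> \<noteq> 0 \<and> (\<exists>y. common_zero (Ubar U \<gamma>1 \<gamma>2 f1 f2 y) (\<rho>, 0))}"

definition TFrho ::
  "(int \<times> int \<Rightarrow> int \<times> int) \<Rightarrow> int \<times> int \<Rightarrow> int \<times> int \<Rightarrow> 'a::real_normed_field lpoly \<Rightarrow> 'a lpoly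
    \<Rightarrow> 'a \<Rightarrow> ('a \<times> 'a) set" where
  "TFrho U \<gamma>1 \<gamma>2 f1 f2 \<rho> = closure
     {y. common_zero (Ubar U \<gamma>1 \<gamma>2 f1 f2 y) (\<rho>, 0) \<and>
         (\<exists>r ys. (\<forall>k. fst (r k) \<noteq> 0 \<and> snd (r k) \<noteq> 0) \<and>
                 r \<longlonglongrightarrow> (\<rho>, 0) \<and> ys \<longlonglongrightarrow> y \<and>
                 (\<forall>k. common_zero (Ubar U \<gamma>1 \<gamma>2 f1 f2 (ys k)) (r k)))}"

definition TF ::
  "(int \<times> int \<Rightarrow> int \<times> int) \<Rightarrow> int \<times> int \<Rightarrow> int \<times> int \<Rightarrow> 'a::real_normed_field lpoly \<Rightarrow> 'a lpoly
    \<Rightarrow> ('a \<times> 'a) set" where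
  "TF U \<gamma>1 \<gamma>2 f1 f2 = (\<Union>\<rho>\<in>Sol U \<gamma>1 \<gamma>2 f1 f2. TFrho U \<gamma>1 \<gamma>2 f1 f2 \<rho>)"

end

theory Submission
  imports Defs
begin


lemma Umat_rel:
  assumes "det2 v w = 1 \<or> det2 v w = -1" "det2 v w' = 1 \<or> det2 v w' = -1"
  shows "Umat v w' a = (fst (Umat v w a) + (det2 v w' * det2 w w') * snd (Umat v w a),
                        (det2 v w * det2 v w') * snd (Umat v w a))"
proof -
  obtain v1 v2 w1 w2 x1 x2 a1 a2 where e: "v = (v1,v2)" "w = (w1,w2)" "w' = (x1,x2)" "a = (a1,a2)"
    by (cases v, cases w, cases w', cases a) auto
  define d where "d = v1*w2 - v2*w1"
  define d' where "d' = v1*x2 - v2*x1"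
  have dd: "d*d = 1" "d'*d' = 1" using assms by (auto simp: e det2_def d_def d'_def)
  have pl: "d * (a1*x2 - a2*x1) = (a1*w2 - a2*w1) * d' + (v1*a2 - v2*a1) * (w1*x2 - w2*x1)"
    unfolding d_def d'_def by algebra
  have c1: "d' * (x2*a1 - x1*a2) = d*(w2*a1 - w1*a2) + (d' * (w1*x2 - w2*x1)) * (d*(v1*a2 - v2*a1))"
  proof -
    have "d' * (x2*a1 - x1*a2) = d' * (d*d) * (a1*x2 - a2*x1)" using dd by (simp add: algebra_simps)
    also have "\<dots> = d' * d * (d * (a1*x2 - a2*x1))" by (simp add: algebra_simps)
    also have "\<dots> = d' * d * ((a1*w2 - a2*w1) * d' + (v1*a2 - v2*a1) * (w1*x2 - w2*x1))" by (simp add: pl)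
    also have "\<dots> = (d'*d') * d * (a1*w2 - a2*w1) + d' * (w1*x2 - w2*x1) * (d*(v1*a2 - v2*a1))"
      by (simp add: algebra_simps)
    finally show ?thesis using dd by (simp add: algebra_simps)
  qed
  have c2: "d' * (v1*a2 - v2*a1) = (d*d') * (d*(v1*a2 - v2*a1))"
  proof -
    have "(d*d') * (d*(v1*a2 - v2*a1)) = (d*d) * d' * (v1*a2 - v2*a1)" by (simp add: algebra_simps)
    then show ?thesis using dd by simp
  qed
  show ?thesis using c1 c2 by (simp add: e Umat_def det2_def Let_def d_def d'_def)
qed



lemma leval_ptrans:
  fixes Q :: "'a::field lpoly"
  assumes "finite (supp Q)"
  shows "leval (ptrans U Q) z = (\<Sum>a\<in>supp Q. Q a * (fst z powi fst (U a) * snd z powi snd (U a)))"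
proof -
  let ?g = "\<lambda>b. fst z powi fst b * snd z powi snd b"
  have s: "supp (ptrans U Q) \<subseteq> U ` supp Q"
  proof
    fix b assume "b \<in> supp (ptrans U Q)"
    then have "ptrans U Q b \<noteq> 0" unfolding supp_def by simp
    then have "{a \<in> supp Q. U a = b} \<noteq> {}" unfolding ptrans_def by force
    then show "b \<in> U ` supp Q" by blast
  qed
  have "leval (ptrans U Q) z = (\<Sum>b\<in>supp (ptrans U Q). ptrans U Q b * ?g b)"
    unfolding leval_def by (simp add: mult.assoc)
  also have "\<dots> = (\<Sum>b\<in>U ` supp Q. ptrans U Q b * ?g b)"
  proof (rule sum.mono_neutral_left)
    show "finite (U ` supp Q)" using assms by simp
    show "supp (ptrans U Q) \<subseteq> U ` supp Q" by (rule s)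
    show "\<forall>i\<in>U ` supp Q - supp (ptrans U Q). ptrans U Q i * ?g i = 0"
      unfolding supp_def by simp
  qed
  also have "\<dots> = (\<Sum>b\<in>U ` supp Q. (\<Sum>a\<in>{a\<in>supp Q. U a = b}. Q a * ?g (U a)))"
  proof (rule sum.cong[OF refl])
    fix b assume "b \<in> U ` supp Q"
    have "(\<Sum>a\<in>{a\<in>supp Q. U a = b}. Q a * ?g (U a)) = (\<Sum>a\<in>{a\<in>supp Q. U a = b}. Q a * ?g b)"
      by (rule sum.cong) auto
    then show "ptrans U Q b * ?g b = (\<Sum>a\<in>{a\<in>supp Q. U a = b}. Q a * ?g (U a))"
      unfolding ptrans_def by (simp add: sum_distrib_right)
  qed
  also have "\<dots> = (\<Sum>a\<in>supp Q. Q a * ?g (U a))"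
    by (rule sum.image_gen[symmetric]) (rule assms)
  finally show ?thesis .
qed
definition psi :: "int \<Rightarrow> 'a::field \<times> 'a \<Rightarrow> 'a \<times> 'a" where
  "psi c z = (fst z, fst z powi c * snd z)"

lemma leval_ptrans_rel:
  fixes Q :: "'a::field lpoly"
  assumes "finite (supp Q)" "\<And>a. a \<in> supp Q \<Longrightarrow> U' a = (fst (U a) + c * snd (U a), snd (U a))"
    "fst z \<noteq> 0"
  shows "leval (ptrans U' Q) z = leval (ptrans U Q) (psi c z)"
  unfolding leval_ptrans[OF assms(1)] psi_def
proof (rule sum.cong[OF refl])
  fix a assume a: "a \<in> supp Q"
  have "fst z powi (fst (U a) + c * snd (U a)) = fst z powi fst (U a) * (fst z powi c) powi snd (U a)"
    using assms(3) by (simp add: power_int_add power_int_mult)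
  then show "Q a * (fst z powi fst (U' a) * snd z powi snd (U' a)) =
         Q a * (fst (fst z, fst z powi c * snd z) powi fst (U a) * snd (fst z, fst z powi c * snd z) powi snd (U a))"
    using assms(2)[OF a] by (simp add: power_int_mult_distrib)
qed

lemma psi_inv: "fst z \<noteq> 0 \<Longrightarrow> psi c (psi (-c) z) = z"
  by (cases z) (simp add: psi_def power_int_minus)

definition Rel where
  "Rel U' U c \<gamma>1 \<gamma>2 f1 f2 \<longleftrightarrow> (\<forall>y z. fst z \<noteq> 0 \<longrightarrow>
     (common_zero (Ubar U' \<gamma>1 \<gamma>2 f1 f2 y) z \<longleftrightarrow> common_zero (Ubar U \<gamma>1 \<gamma>2 f1 f2 y) (psi c z)))"

lemma Rel_sym: "Rel U' U c \<gamma>1 \<gamma>2 f1 f2 \<Longrightarrow> Rel U U' (-c) \<gamma>1 \<gamma>2 f1 f2"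
  unfolding Rel_def
proof (intro allI impI)
  fix y and z :: "'a \<times> 'a"
  assume R: "\<forall>y z. fst z \<noteq> 0 \<longrightarrow>
     (common_zero (Ubar U' \<gamma>1 \<gamma>2 f1 f2 y) z \<longleftrightarrow> common_zero (Ubar U \<gamma>1 \<gamma>2 f1 f2 y) (psi c z))"
    and z: "fst z \<noteq> 0"
  have "fst (psi (-c) z) \<noteq> 0" using z by (simp add: psi_def)
  then show "common_zero (Ubar U \<gamma>1 \<gamma>2 f1 f2 y) z = common_zero (Ubar U' \<gamma>1 \<gamma>2 f1 f2 y) (psi (- c) z)"
    using R psi_inv[OF z, of c] by metis
qed

lemma psi_rho: "psi c (\<rho>, 0) = (\<rho>, 0)" by (simp add: psi_def)

lemma TF_sub:
  fixes f1 f2 :: "'a::real_normed_field lpoly"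
  assumes R: "Rel U' U c \<gamma>1 \<gamma>2 f1 f2"
  shows "TF U' \<gamma>1 \<gamma>2 f1 f2 \<subseteq> TF U \<gamma>1 \<gamma>2 f1 f2"
proof -
  have cz: "common_zero (Ubar U' \<gamma>1 \<gamma>2 f1 f2 y) (\<rho>, 0) \<longleftrightarrow> common_zero (Ubar U \<gamma>1 \<gamma>2 f1 f2 y) (\<rho>, 0)"
    if "\<rho> \<noteq> 0" for y \<rho>
    using R that unfolding Rel_def by (metis fst_conv psi_rho)
  have Sol: "Sol U' \<gamma>1 \<gamma>2 f1 f2 = Sol U \<gamma>1 \<gamma>2 f1 f2"
    unfolding Sol_def using cz by blast
  have "TFrho U' \<gamma>1 \<gamma>2 f1 f2 \<rho> \<subseteq> TFrho U \<gamma>1 \<gamma>2 f1 f2 \<rho>" if rho: "\<rho> \<noteq> 0" for \<rho>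
    unfolding TFrho_def
  proof (rule closure_mono, rule subsetI)
    fix y assume "y \<in> {y. common_zero (Ubar U' \<gamma>1 \<gamma>2 f1 f2 y) (\<rho>, 0) \<and>
         (\<exists>r ys. (\<forall>k. fst (r k) \<noteq> 0 \<and> snd (r k) \<noteq> 0) \<and>
                 r \<longlonglongrightarrow> (\<rho>, 0) \<and> ys \<longlonglongrightarrow> y \<and>
                 (\<forall>k. common_zero (Ubar U' \<gamma>1 \<gamma>2 f1 f2 (ys k)) (r k)))}"
    then obtain r ys where y0: "common_zero (Ubar U' \<gamma>1 \<gamma>2 f1 f2 y) (\<rho>, 0)"
      and nz: "\<forall>k. fst (r k) \<noteq> 0 \<and> snd (r k) \<noteq> 0" and lr: "r \<longlonglongrightarrow> (\<rho>, 0)" and ly: "ys \<longlonglongrightarrow> y"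
      and czk: "\<forall>k. common_zero (Ubar U' \<gamma>1 \<gamma>2 f1 f2 (ys k)) (r k)" by blast
    define r' where "r' = (\<lambda>k. psi c (r k))"
    have nz': "\<forall>k. fst (r' k) \<noteq> 0 \<and> snd (r' k) \<noteq> 0"
      using nz by (simp add: r'_def psi_def)
    have l1: "(\<lambda>k. fst (r k)) \<longlonglongrightarrow> \<rho>" using tendsto_fst[OF lr] by simp
    have l2: "(\<lambda>k. snd (r k)) \<longlonglongrightarrow> 0" using tendsto_snd[OF lr] by simp
    have l3: "(\<lambda>k. fst (r k) powi c * snd (r k)) \<longlonglongrightarrow> \<rho> powi c * 0"
      by (intro tendsto_mult tendsto_power_int l1 l2 rho)
    have lr': "r' \<longlonglongrightarrow> (\<rho>, 0)"
      unfolding r'_def psi_def using tendsto_Pair[OF l1 l3] by simp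
    have czk': "\<forall>k. common_zero (Ubar U \<gamma>1 \<gamma>2 f1 f2 (ys k)) (r' k)"
      using czk nz R unfolding Rel_def r'_def by blast
    show "y \<in> {y. common_zero (Ubar U \<gamma>1 \<gamma>2 f1 f2 y) (\<rho>, 0) \<and>
         (\<exists>r ys. (\<forall>k. fst (r k) \<noteq> 0 \<and> snd (r k) \<noteq> 0) \<and>
                 r \<longlonglongrightarrow> (\<rho>, 0) \<and> ys \<longlonglongrightarrow> y \<and>
                 (\<forall>k. common_zero (Ubar U \<gamma>1 \<gamma>2 f1 f2 (ys k)) (r k)))}"
      using y0 cz[OF rho] nz' lr' ly czk' by blast
  qed
  moreover have "\<rho> \<noteq> 0" if "\<rho> \<in> Sol U' \<gamma>1 \<gamma>2 f1 f2" for \<rho> using that by (simp add: Sol_def)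
  ultimately show ?thesis unfolding TF_def Sol by blast
qed



lemma int_prop_eq:
  fixes v1 v2 x1 x2 :: int and \<mu> :: real
  assumes g1: "gcd v1 v2 = 1" and g2: "gcd x1 x2 = 1" and m: "\<mu> > 0"
    and e1: "real_of_int x1 = \<mu> * real_of_int v1" and e2: "real_of_int x2 = \<mu> * real_of_int v2"
  shows "x1 = v1 \<and> x2 = v2"
proof -
  have "real_of_int (v1 * x2) = real_of_int (v2 * x1)" using e1 e2 by simp
  then have cr: "v1 * x2 = v2 * x1" by linarith
  have d1: "v1 dvd x1"
  proof -
    have "v1 dvd v2 * x1" using cr by (metis dvd_triv_left)
    moreover have "coprime v1 v2" using g1 by (simp add: coprime_iff_gcd_eq_1)
    ultimately show ?thesis using coprime_dvd_mult_right_iff by blast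
  qed
  have d2: "x1 dvd v1"
  proof -
    have "x1 dvd v1 * x2" using cr by (metis dvd_triv_right mult.commute)
    moreover have "coprime x1 x2" using g2 by (simp add: coprime_iff_gcd_eq_1)
    ultimately show ?thesis using coprime_dvd_mult_left_iff by blast
  qed
  have d3: "v2 dvd x2"
  proof -
    have "v2 dvd v1 * x2" using cr by (metis dvd_triv_left)
    moreover have "coprime v2 v1" using g1 by (simp add: coprime_iff_gcd_eq_1 gcd.commute)
    ultimately show ?thesis using coprime_dvd_mult_right_iff by blast
  qed
  have d4: "x2 dvd v2"
  proof -
    have "x2 dvd x1 * v2" using cr by (metis dvd_triv_right mult.commute)
    moreover have "coprime x2 x1" using g2 by (simp add: coprime_iff_gcd_eq_1 gcd.commute)
    ultimately show ?thesis using coprime_dvd_mult_right_iff by (metis mult.commute)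
  qed
  have a1: "\<bar>x1\<bar> = \<bar>v1\<bar>" using zdvd_antisym_abs[OF d2 d1] .
  have a2: "\<bar>x2\<bar> = \<bar>v2\<bar>" using zdvd_antisym_abs[OF d4 d3] .
  have "v1 \<noteq> 0 \<or> v2 \<noteq> 0" using g1 by auto
  then have "\<mu> = 1"
  proof
    assume "v1 \<noteq> 0"
    have "\<bar>real_of_int x1\<bar> = \<mu> * \<bar>real_of_int v1\<bar>" using e1 m by (simp add: abs_mult)
    moreover have "\<bar>real_of_int x1\<bar> = \<bar>real_of_int v1\<bar>" using a1 by (metis of_int_abs)
    ultimately show ?thesis using \<open>v1 \<noteq> 0\<close> by simp
  next
    assume "v2 \<noteq> 0"
    have "\<bar>real_of_int x2\<bar> = \<mu> * \<bar>real_of_int v2\<bar>" using e2 m by (simp add: abs_mult)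
    moreover have "\<bar>real_of_int x2\<bar> = \<bar>real_of_int v2\<bar>" using a2 by (metis of_int_abs)
    ultimately show ?thesis using \<open>v2 \<noteq> 0\<close> by simp
  qed
  then show ?thesis using e1 e2 by simp
qed

lemma v_unique:
  assumes ex: "rvec a extreme_point_of G" and ad: "aff_dim G = 1"
    and p: "rvec a + t *\<^sub>R rvec v \<in> G" "t > 0"
    and q: "rvec a + t' *\<^sub>R rvec v' \<in> G" "t' > 0"
    and g: "gcd (fst v) (snd v) = 1" "gcd (fst v') (snd v') = 1"
  shows "v = v'"
proof -
  let ?x = "rvec a" and ?p = "rvec a + t *\<^sub>R rvec v" and ?q = "rvec a + t' *\<^sub>R rvec v'"
  have xG: "?x \<in> G" using ex by (simp add: extreme_point_of_def)
  have "collinear G" using ad by (simp add: collinear_aff_dim)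
  then have "collinear {?x, ?p, ?q}" using xG p q by (meson collinear_subset empty_subsetI insert_subset)
  then obtain u where u: "\<forall>x\<in>{?x, ?p, ?q}. \<forall>y\<in>{?x, ?p, ?q}. \<exists>c. x - y = c *\<^sub>R u"
    unfolding collinear_def by blast
  then obtain c1 c2 where c1: "t *\<^sub>R rvec v = c1 *\<^sub>R u" and c2: "t' *\<^sub>R rvec v' = c2 *\<^sub>R u"
    by (metis add_diff_cancel_left' insertCI)
  have vnz: "rvec v \<noteq> 0" "rvec v' \<noteq> 0" using g by (auto simp: rvec_def zero_prod_def)
  have c1nz: "c1 \<noteq> 0" using c1 vnz p(2) by auto
  have c2nz: "c2 \<noteq> 0" using c2 vnz q(2) by auto
  have "\<not> c1 * c2 < 0"
  proof
    assume neg: "c1 * c2 < 0"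
    define s where "s = c1 / (c1 - c2)"
    have d: "c1 - c2 \<noteq> 0" using neg by auto
    have s0: "s > 0 \<and> s < 1"
    proof (cases "c1 > 0")
      case True
      then have "c2 < 0" using neg by (simp add: mult_less_0_iff)
      then have "c1 - c2 > c1" by simp
      then show ?thesis unfolding s_def using True by (simp add: divide_less_eq zero_less_divide_iff)
    next
      case False
      then have "c1 < 0" using c1nz by simp
      then have "c2 > 0" using neg by (simp add: mult_less_0_iff)
      then have "c1 - c2 < c1" by simp
      then show ?thesis unfolding s_def using \<open>c1 < 0\<close> by (simp add: divide_less_eq zero_less_divide_iff)
    qed
    have "?p \<noteq> ?q"
    proof
      assume "?p = ?q"
      then have "c1 *\<^sub>R u = c2 *\<^sub>R u" using c1 c2 by simp
      then have "c1 = c2" using c1 c1nz vnz p(2) by auto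
      then show False using neg by (simp add: mult_less_0_iff)
    qed
    moreover have "?x = (1 - s) *\<^sub>R ?p + s *\<^sub>R ?q"
    proof -
      have "(1 - s) *\<^sub>R ?p + s *\<^sub>R ?q = ?x + ((1 - s) * c1 + s * c2) *\<^sub>R u"
        using c1 c2 by (simp add: algebra_simps scaleR_add_right)
      moreover have "(1 - s) * c1 + s * c2 = 0" unfolding s_def using d by (simp add: field_simps)
      ultimately show ?thesis by simp
    qed
    ultimately have "?x \<in> open_segment ?p ?q" using s0 by (auto simp: in_segment)
    then show False using ex p(1) q(1) by (simp add: extreme_point_of_def)
  qed
  then have "c1 * c2 > 0" using c1nz c2nz by (simp add: not_less le_less)
  then have pos: "c2 / c1 > 0" by (auto simp: zero_less_divide_iff zero_less_mult_iff)
  define \<mu> where "\<mu> = (c2 * t) / (c1 * t')"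
  have mu: "\<mu> > 0" using pos p(2) q(2) unfolding \<mu>_def
    by (auto simp: zero_less_divide_iff zero_less_mult_iff mult_less_0_iff)
  have "rvec v' = \<mu> *\<^sub>R rvec v"
  proof -
    have "u = (1/c1) *\<^sub>R (c1 *\<^sub>R u)" using c1nz by simp
    also have "\<dots> = (t / c1) *\<^sub>R rvec v" unfolding c1[symmetric] by simp
    finally have "u = (t / c1) *\<^sub>R rvec v" .
    then have "t' *\<^sub>R rvec v' = (c2 * t / c1) *\<^sub>R rvec v" using c2 by simp
    then have "(1/t') *\<^sub>R (t' *\<^sub>R rvec v') = (1/t') *\<^sub>R ((c2 * t / c1) *\<^sub>R rvec v)" by simp
    then show ?thesis using q(2) unfolding \<mu>_def by simp
  qed
  then have "real_of_int (fst v') = \<mu> * real_of_int (fst v)" "real_of_int (snd v') = \<mu> * real_of_int (snd v)"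
    by (auto simp: rvec_def)
  from int_prop_eq[OF g(1) g(2) mu this] show ?thesis by (simp add: prod_eq_iff)
qed



lemma rvec_add: "rvec (a + b) = rvec a + rvec b"
  by (simp add: rvec_def plus_prod_def)

lemma supp_shift:
  assumes "f (0,0) \<noteq> 0" "a \<in> supp (xshift g (minus_const f c))"
  shows "a + g \<in> supp f"
  using assms unfolding supp_def xshift_def minus_const_def by (auto split: if_splits)

lemma finite_shift:
  assumes "finite (supp f)" "f (0,0) \<noteq> 0"
  shows "finite (supp (xshift g (minus_const f c)))"
proof -
  have "supp (xshift g (minus_const f c)) \<subseteq> (\<lambda>a. a - g) ` supp f"
  proof
    fix a assume "a \<in> supp (xshift g (minus_const f c))"
    then have "a + g \<in> supp f" using supp_shift assms(2) by blast
    then show "a \<in> (\<lambda>a. a - g) ` supp f" by (metis add_diff_cancel image_eqI)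
  qed
  then show ?thesis using assms(1) finite_subset by blast
qed

lemma in_msum:
  assumes "a + g1 \<in> supp f1" "rvec g2 \<in> NP f2" "a1 = g1 + g2"
  shows "rvec a1 + rvec a \<in> msum (NP f1) (NP f2)"
proof -
  have "rvec (a + g1) \<in> NP f1" unfolding NP_def using assms(1) by (simp add: hull_inc)
  moreover have "rvec a1 + rvec a = rvec (a + g1) + rvec g2" using assms(3) by (simp add: rvec_add algebra_simps)
  ultimately show ?thesis unfolding msum_def using assms(2) by blast
qed

lemma cone_snd:
  assumes "toric_basis A \<Gamma> a1 v w" "rvec a1 + rvec a \<in> A"
  shows "snd (Umat v w a) \<ge> 0"
proof -
  obtain b1 b2 where b: "b2 \<ge> 0" "rvec a = b1 *\<^sub>R rvec v + b2 *\<^sub>R rvec w"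
    using assms unfolding toric_basis_def by (metis add_diff_cancel_left')
  have d: "det2 v w = 1 \<or> det2 v w = -1" using assms(1) by (simp add: toric_basis_def)
  have e1: "real_of_int (fst a) = b1 * fst v + b2 * fst w" and e2: "real_of_int (snd a) = b1 * snd v + b2 * snd w"
    using b(2) by (auto simp: rvec_def)
  have "real_of_int (fst v * snd a - snd v * fst a) = b2 * real_of_int (det2 v w)"
    using e1 e2 by (simp add: det2_def algebra_simps)
  then have "real_of_int (snd (Umat v w a)) = b2 * (real_of_int (det2 v w))^2"
    by (simp add: Umat_def Let_def power2_eq_square)
  also have "\<dots> = b2" using d by auto
  finally show ?thesis using b(1) by simp
qed


lemma main_gen:
  fixes f1 f2 :: "'a::real_normed_field lpoly"
  assumes P1: "is_poly2 f1" and P2: "is_poly2 f2" and z1: "f1 (0,0) \<noteq> 0" and z2: "f2 (0,0) \<noteq> 0"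
    and edge: "is_edge (msum (NP f1) (NP f2)) \<Gamma>" and mv: "min_norm_vertex \<Gamma> a1"
    and g1: "rvec \<gamma>1 extreme_point_of face (NP f1) \<alpha>" and g2: "rvec \<gamma>2 extreme_point_of face (NP f2) \<alpha>"
    and ga: "\<gamma>1 + \<gamma>2 = a1"
    and U: "U \<in> T_Gamma (msum (NP f1) (NP f2)) \<Gamma> a1" and U': "U' \<in> T_Gamma (msum (NP f1) (NP f2)) \<Gamma> a1"
  shows "TF U \<gamma>1 \<gamma>2 f1 f2 = TF U' \<gamma>1 \<gamma>2 f1 f2"
proof -
  let ?A = "msum (NP f1) (NP f2)"
  obtain v w where tb: "toric_basis ?A \<Gamma> a1 v w" and Ue: "U = Umat v w"
    using U unfolding T_Gamma_def by blast
  obtain v' w' where tb': "toric_basis ?A \<Gamma> a1 v' w'" and Ue': "U' = Umat v' w'"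
    using U' unfolding T_Gamma_def by blast
  have vv: "v = v'"
  proof -
    obtain t where t: "t > 0" "rvec a1 + t *\<^sub>R rvec v \<in> \<Gamma>" using tb unfolding toric_basis_def by blast
    obtain t' where t': "t' > 0" "rvec a1 + t' *\<^sub>R rvec v' \<in> \<Gamma>" using tb' unfolding toric_basis_def by blast
    show ?thesis
      by (rule v_unique[OF _ _ t(2) t(1) t'(2) t'(1)])
         (use mv edge tb tb' in \<open>auto simp: min_norm_vertex_def is_edge_def toric_basis_def\<close>)
  qed
  have d: "det2 v w = 1 \<or> det2 v w = -1" using tb by (simp add: toric_basis_def)
  have d': "det2 v w' = 1 \<or> det2 v w' = -1" using tb' vv by (simp add: toric_basis_def)
  define c where "c = det2 v w' * det2 w w'"
  define \<sigma> where "\<sigma> = det2 v w * det2 v w'"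
  have rel: "\<And>a. U' a = (fst (U a) + c * snd (U a), \<sigma> * snd (U a))"
    unfolding Ue Ue' c_def \<sigma>_def vv[symmetric] by (rule Umat_rel[OF d d'])
  have g2in: "rvec \<gamma>2 \<in> NP f2" and g1in: "rvec \<gamma>1 \<in> NP f1"
    using g1 g2 by (auto simp: extreme_point_of_def face_def)
  have fin1: "finite (supp f1)" and fin2: "finite (supp f2)" using P1 P2 by (auto simp: is_poly2_def)
  define Q1 :: "'a \<times> 'a \<Rightarrow> 'a lpoly" where "Q1 = (\<lambda>y. xshift \<gamma>1 (minus_const f1 (fst y)))"
  define Q2 :: "'a \<times> 'a \<Rightarrow> 'a lpoly" where "Q2 = (\<lambda>y. xshift \<gamma>2 (minus_const f2 (snd y)))"
  have finQ: "finite (supp (Q1 y))" "finite (supp (Q2 y))" for y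
    unfolding Q1_def Q2_def using finite_shift fin1 fin2 z1 z2 by blast+
  have inA: "rvec a1 + rvec a \<in> ?A" if "a \<in> supp (Q1 y) \<or> a \<in> supp (Q2 y)" for a y
    using that
  proof
    assume "a \<in> supp (Q1 y)"
    then have "a + \<gamma>1 \<in> supp f1" unfolding Q1_def using supp_shift z1 by blast
    then show ?thesis using in_msum g2in ga by blast
  next
    assume "a \<in> supp (Q2 y)"
    then have "a + \<gamma>2 \<in> supp f2" unfolding Q2_def using supp_shift z2 by blast
    then have "rvec a1 + rvec a \<in> msum (NP f2) (NP f1)" using in_msum g1in ga by (metis add.commute)
    then obtain p q where "rvec a1 + rvec a = p + q" "p \<in> NP f2" "q \<in> NP f1" unfolding msum_def by blast
    then have "rvec a1 + rvec a = q + p" "q \<in> NP f1" "p \<in> NP f2" by (simp_all add: add.commute)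
    then show ?thesis unfolding msum_def by blast
  qed
  have pos: "snd (U a) \<ge> 0" "snd (U' a) \<ge> 0" if "a \<in> supp (Q1 y) \<or> a \<in> supp (Q2 y)" for a y
    using cone_snd[OF tb inA[OF that]] cone_snd[OF tb' inA[OF that]] Ue Ue' by auto
  have Ub: "Ubar V \<gamma>1 \<gamma>2 f1 f2 y = (ptrans V (Q1 y), ptrans V (Q2 y))" for V and y :: "'a \<times> 'a"
    by (simp add: Ubar_def Q1_def Q2_def)
  have R: "Rel U' U c0 \<gamma>1 \<gamma>2 f1 f2" if c0: "c0 = (if \<sigma> = 1 then c else 0)" for c0
  proof (cases "\<sigma> = 1")
    case True
    have "leval (ptrans U' Q) z = leval (ptrans U Q) (psi c z)"
      if "Q = Q1 y \<or> Q = Q2 y" "fst z \<noteq> 0" for Q y and z :: "'a \<times> 'a"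
    proof (rule leval_ptrans_rel)
      show "finite (supp Q)" using that(1) finQ by blast
      show "U' a = (fst (U a) + c * snd (U a), snd (U a))" for a using rel[of a] True by simp
      show "fst z \<noteq> 0" by (rule that(2))
    qed
    note H = this
    show ?thesis unfolding Rel_def
    proof (intro allI impI)
      fix y and z :: "'a \<times> 'a" assume z: "fst z \<noteq> 0"
      show "common_zero (Ubar U' \<gamma>1 \<gamma>2 f1 f2 y) z = common_zero (Ubar U \<gamma>1 \<gamma>2 f1 f2 y) (psi c0 z)"
        unfolding Ub common_zero_def c0 using True H[of "Q1 y" y z, OF _ z] H[of "Q2 y" y z, OF _ z] by simp
    qed
  next
    case False
    then have s: "\<sigma> = -1" using d d' unfolding \<sigma>_def by auto
    have eq: "ptrans U' Q = ptrans U Q" if "Q = Q1 y \<or> Q = Q2 y" for Q y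
    proof -
      have "U' a = U a" if "a \<in> supp Q" for a
      proof -
        have "snd (U a) \<ge> 0" "snd (U' a) \<ge> 0" using pos \<open>a \<in> supp Q\<close> \<open>Q = Q1 y \<or> Q = Q2 y\<close> by blast+
        then have "snd (U a) = 0" using rel[of a] s by simp
        then show ?thesis using rel[of a] by (simp add: prod_eq_iff)
      qed
      then show ?thesis unfolding ptrans_def by (intro ext sum.cong) auto
    qed
    have "psi 0 z = z" for z :: "'a \<times> 'a" by (simp add: psi_def)
    note P0 = this
    have "ptrans U' (Q1 y) = ptrans U (Q1 y)" "ptrans U' (Q2 y) = ptrans U (Q2 y)" for y
      using eq by blast+
    then show ?thesis unfolding Rel_def c0 using False P0 by (simp add: Ub)
  qed
  then have R1: "Rel U' U (if \<sigma> = 1 then c else 0) \<gamma>1 \<gamma>2 f1 f2" by blast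
  show ?thesis using TF_sub[OF R1] TF_sub[OF Rel_sym[OF R1]] by blast
qed

theorem lemma4p2:
  shows
  "(\<forall>(f1 :: real lpoly) f2 \<alpha> \<Gamma> a1 \<gamma>1 \<gamma>2 U U'.
      is_poly2 f1 \<and> is_poly2 f2 \<and> dominant2 f1 f2 \<and> f1 (0, 0) \<noteq> 0 \<and> f2 (0, 0) \<noteq> 0 \<and>
      is_edge (msum (NP f1) (NP f2)) \<Gamma> \<and>
      \<alpha> \<noteq> 0 \<and> \<Gamma> = face (msum (NP f1) (NP f2)) \<alpha> \<and>
      min_norm_vertex \<Gamma> a1 \<and>
      rvec \<gamma>1 extreme_point_of face (NP f1) \<alpha> \<and> rvec \<gamma>2 extreme_point_of face (NP f2) \<alpha> \<and>
      \<gamma>1 + \<gamma>2 = a1 \<and>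
      U \<in> T_Gamma (msum (NP f1) (NP f2)) \<Gamma> a1 \<and> U' \<in> T_Gamma (msum (NP f1) (NP f2)) \<Gamma> a1
      \<longrightarrow> TF U \<gamma>1 \<gamma>2 f1 f2 = TF U' \<gamma>1 \<gamma>2 f1 f2)
  \<and>
   (\<forall>(f1 :: complex lpoly) f2 \<alpha> \<Gamma> a1 \<gamma>1 \<gamma>2 U U'.
      is_poly2 f1 \<and> is_poly2 f2 \<and> dominant2 f1 f2 \<and> f1 (0, 0) \<noteq> 0 \<and> f2 (0, 0) \<noteq> 0 \<and>
      is_edge (msum (NP f1) (NP f2)) \<Gamma> \<and>
      \<alpha> \<noteq> 0 \<and> \<Gamma> = face (msum (NP f1) (NP f2)) \<alpha> \<and>
      min_norm_vertex \<Gamma> a1 \<and>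
      rvec \<gamma>1 extreme_point_of face (NP f1) \<alpha> \<and> rvec \<gamma>2 extreme_point_of face (NP f2) \<alpha> \<and>
      \<gamma>1 + \<gamma>2 = a1 \<and>
      U \<in> T_Gamma (msum (NP f1) (NP f2)) \<Gamma> a1 \<and> U' \<in> T_Gamma (msum (NP f1) (NP f2)) \<Gamma> a1
      \<longrightarrow> TF U \<gamma>1 \<gamma>2 f1 f2 = TF U' \<gamma>1 \<gamma>2 f1 f2)"
  by (intro conjI allI impI; elim conjE; rule main_gen; assumption)

end
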